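(* (Hammock Lemma) Let $\tilde f,f,g\in\breve{\mathcal D}$ and $c:=\int f/\int g$ satisfy $g\lhd f$, $\tilde f\le f$ and $\tilde f(x)\le\tilde g(x):=g(x/c)$ for all $x\in[0,1]$. Then $\int Tf-\int Tg<1-\int\tilde f/\int f$.
   Context: $\int f:=\int_0^1f(x)\,dx$. $\breve{\mathcal D}$: the set of continuous, convex, strictly decreasing $f\colon[0,1]\to[0,1]$ with $f(0)=1$, $f(1)=0$; for such $f$, $f^*=f^{-1}$ and $(Tf)(x):=\frac{\int_x^1f^{-1}}{\int f}$. For $f$ and $a>0$, $f_{[a]}(x):=f(ax)$ on $[0,\frac1a]$; for $b>0$, $f_{[a]}-bg$ is considered on $[0,\min\{1,\frac1a\}]$. Sign switches: for continuous $\Delta\colon[c_0,d_0]\to\mathbb R$, a closed subinterval $[c',d']$ with $c_0<c'\le d'<d_0$ and $\Delta([c',d'])=\{0\}$ is a sign switch if there is $\delta\in(0,\min\{c'-c_0,d_0-d'\}]$ with $\Delta(c'-x)\Delta(d'+x)<0$ for all $x\in(0,\delta]$; $\chi\Delta$ is their number. Crossing number $\chi(f,g):=\sup\{\chi(f_{[a]}-bg):a,b>0\}$. Domination $g\lhd f$: $\chi(f,g)=2$ and $g\le f$ pointwise. *)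

theory Defs
  imports "HOL-Analysis.Analysis" "HOL-Library.Extended_Nat"
begin

definition int01 :: "(real \<Rightarrow> real) \<Rightarrow> real" where
  "int01 f = integral {0..1} f"

definition Dbreve :: "(real \<Rightarrow> real) \<Rightarrow> bool" where
  "Dbreve f \<longleftrightarrow> continuous_on {0..1} f \<and> convex_on {0..1} f
     \<and> (\<forall>x\<in>{0..1}. \<forall>y\<in>{0..1}. x < y \<longrightarrow> f y < f x)
     \<and> f ` {0..1} \<subseteq> {0..1} \<and> f 0 = 1 \<and> f 1 = 0"

definition finv :: "(real \<Rightarrow> real) \<Rightarrow> real \<Rightarrow> real" where
  "finv f = inv_into {0..1} f"

definition Top :: "(real \<Rightarrow> real) \<Rightarrow> real \<Rightarrow> real" where
  "Top f x = integral {x..1} (finv f) / int01 f"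

definition sign_switch :: "(real \<Rightarrow> real) \<Rightarrow> real \<Rightarrow> real \<Rightarrow> real \<times> real \<Rightarrow> bool" where
  "sign_switch \<Delta> c0 d0 p \<longleftrightarrow> (case p of (c', d') \<Rightarrow>
     c0 < c' \<and> c' \<le> d' \<and> d' < d0 \<and> (\<forall>x\<in>{c'..d'}. \<Delta> x = 0) \<and>
     (\<exists>\<delta>>0. \<delta> \<le> min (c' - c0) (d0 - d') \<and>
        (\<forall>x\<in>{0<..\<delta>}. \<Delta> (c' - x) * \<Delta> (d' + x) < 0)))"

definition nswitch :: "(real \<Rightarrow> real) \<Rightarrow> real \<Rightarrow> real \<Rightarrow> enat" where
  "nswitch \<Delta> c0 d0 =
     (if finite {p. sign_switch \<Delta> c0 d0 p} then enat (card {p. sign_switch \<Delta> c0 d0 p}) else \<infinity>)"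

definition crossing :: "(real \<Rightarrow> real) \<Rightarrow> (real \<Rightarrow> real) \<Rightarrow> enat" where
  "crossing f g = (SUP p\<in>{p. fst p > 0 \<and> snd p > 0}.
       nswitch (\<lambda>x. f (fst p * x) - snd p * g x) 0 (min 1 (1 / fst p)))"

definition dominated :: "(real \<Rightarrow> real) \<Rightarrow> (real \<Rightarrow> real) \<Rightarrow> bool" where
  "dominated g f \<longleftrightarrow> crossing f g = 2 \<and> (\<forall>x\<in>{0..1}. g x \<le> f x)"

end

theory Submission
  imports Defs
begin


lemma sard1:
  fixes \<rho> :: "real \<Rightarrow> real"
  assumes "\<And>x. x \<in> S \<Longrightarrow> (\<rho> has_real_derivative 0) (at x)"
  shows "negligible (\<rho> ` S)"
proof -
  define F :: "real^1 \<Rightarrow> real^1" where "F = (\<lambda>v. vec (\<rho> (v$1)))"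
  define S' :: "(real^1) set" where "S' = vec ` S"
  have der: "(F has_derivative (\<lambda>h. 0)) (at v within S')" if "v \<in> S'" for v
  proof -
    from that obtain x where x: "x \<in> S" "v = vec x" unfolding S'_def by auto
    have d0: "(\<rho> has_derivative (*) 0) (at x)"
      using assms[OF x(1)] by (simp add: has_field_derivative_def)
    have "(*) (0::real) = (\<lambda>h. h * 0)" by auto
    with d0 have d2: "(\<rho> has_derivative (\<lambda>h. h * (\<lambda>_. 0) x)) (at x within S)"
      by (simp add: has_derivative_at_withinI)
    have "((\<lambda>x. vec (\<rho> (x $ 1))) has_derivative (*\<^sub>R) ((\<lambda>_. 0) x)) (at ((vec x)::real^1) within vec ` S)"
      by (rule has_derivative_vector_1[OF d2])
    moreover have "(*\<^sub>R) ((\<lambda>_::real. 0::real) x) = (\<lambda>h::real^1. 0)" by auto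
    ultimately show ?thesis unfolding F_def S'_def x by simp
  qed
  have z: "(\<chi> i j. 0) = (0::real^1^1)" by (simp add: vec_eq_iff)
  have "negligible (F ` S')"
    by (rule baby_Sard[OF _ der]) (auto simp: matrix_def rank_0 vec_0 z)
  moreover have "F ` S' = vec ` (\<rho> ` S)" unfolding F_def S'_def by (auto simp: image_image)
  ultimately have n: "negligible (vec ` (\<rho> ` S) :: (real^1) set)" by simp
  have "negligible ((\<lambda>v::real^1. v$1) ` (vec ` (\<rho> ` S)))"
    by (rule negligible_differentiable_image_negligible[OF _ n])
       (auto intro!: bounded_linear_imp_differentiable_on bounded_linear_vec_nth)
  moreover have "(\<lambda>v::real^1. v$1) ` (vec ` (\<rho> ` S)) = \<rho> ` S" by (auto simp: image_image)
  ultimately show ?thesis by simp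
qed



lemma convex_slopes:
  fixes f :: "real \<Rightarrow> real"
  assumes f: "convex_on {0..1} f" and "0 \<le> u" "u < t" "t < v" "v \<le> 1"
  shows "(f t - f u) / (t - u) \<le> (f v - f u) / (v - u)"
    and "(f v - f u) / (v - u) \<le> (f v - f t) / (v - t)"
proof -
  have "(f u - f t) / (u - t) \<le> (f u - f v) / (u - v)"
       "(f u - f v) / (u - v) \<le> (f t - f v) / (t - v)"
    using convex_on_slope_le[OF f, of u v t] assms by auto
  moreover have "(f u - f t) / (u - t) = (f t - f u) / (t - u)"
    "(f u - f v) / (u - v) = (f v - f u) / (v - u)"
    "(f t - f v) / (t - v) = (f v - f t) / (v - t)" by (simp_all add: divide_simps) (simp_all add: algebra_simps)
  ultimately show "(f t - f u) / (t - u) \<le> (f v - f u) / (v - u)"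
    "(f v - f u) / (v - u) \<le> (f v - f t) / (v - t)" by auto
qed

lemma convex_diff_countable:
  fixes f :: "real \<Rightarrow> real"
  assumes f: "convex_on {0..1} f"
  shows "countable {x\<in>{0<..<1}. \<not> f differentiable (at x)}"
proof -
  define sl where "sl u v = (f v - f u) / (v - u)" for u v
  have slsym: "sl u v = sl v u" for u v unfolding sl_def by (simp add: divide_simps) (simp add: algebra_simps)
  have s1: "sl u t \<le> sl u v" and s2: "sl u v \<le> sl t v" if "0 \<le> u" "u < t" "t < v" "v \<le> 1" for u t v
    using convex_slopes[OF f that] unfolding sl_def by auto
  define L where "L x = Sup ((\<lambda>u. sl u x) ` {0..<x})" for x
  define R where "R x = Inf ((\<lambda>v. sl x v) ` {x<..1})" for x
  have bdd: "sl u x \<le> sl x v" if "0 \<le> u" "u < x" "x < v" "v \<le> 1" for u x v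
    using s1[OF that] s2[OF that] by auto
  have Lup: "sl u x \<le> L x" if "0 \<le> u" "u < x" "x < 1" for u x
    unfolding L_def
  proof (rule cSup_upper)
    show "bdd_above ((\<lambda>u. sl u x) ` {0..<x})"
      by (rule bdd_aboveI2[where M="sl x 1"]) (use bdd that in auto)
  qed (use that in auto)
  have Rlo: "R x \<le> sl x v" if "0 < x" "x < v" "v \<le> 1" for v x
    unfolding R_def
  proof (rule cInf_lower)
    show "bdd_below ((\<lambda>v. sl x v) ` {x<..1})"
      by (rule bdd_belowI2[where m="sl 0 x"]) (use bdd that in auto)
  qed (use that in auto)
  have LR: "L x \<le> R x" if "0 < x" "x < 1" for x
  proof -
    have "sl u x \<le> R x" if "u \<in> {0..<x}" for u
      unfolding R_def by (rule cInf_greatest) (use that \<open>0 < x\<close> \<open>x < 1\<close> bdd in auto)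
    then show ?thesis unfolding L_def by (intro cSup_least) (use that in auto)
  qed
  have RL: "R x \<le> sl x y" "sl x y \<le> L y" if "0 < x" "x < y" "y < 1" for x y
    using Rlo[of x y] Lup[of x y] that slsym by auto
  have diff: "f differentiable (at x)" if x: "0 < x" "x < 1" and eq: "L x = R x" for x
  proof -
    have "((\<lambda>y. (f y - f x) / (y - x)) \<longlongrightarrow> R x) (at x)"
    proof (rule tendstoI)
      fix e :: real assume e: "e > 0"
      have "R x < R x + e" using e by simp
      then obtain v where v: "v \<in> {x<..1}" "sl x v < R x + e"
      proof -
        have ne: "(\<lambda>v. sl x v) ` {x<..1} \<noteq> {}" using x by auto
        have bb: "bdd_below ((\<lambda>v. sl x v) ` {x<..1})"
          by (rule bdd_belowI2[where m="sl 0 x"]) (use bdd x in auto)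
        have "\<exists>v\<in>{x<..1}. sl x v < R x + e"
          using cInf_less_iff[OF ne bb, of "R x + e"] \<open>R x < R x + e\<close> unfolding R_def by simp
        then show ?thesis using that by auto
      qed
      have "L x - e < L x" using e by simp
      then obtain u where u: "u \<in> {0..<x}" "L x - e < sl u x"
      proof -
        have ne: "(\<lambda>u. sl u x) ` {0..<x} \<noteq> {}" using x by auto
        have bb: "bdd_above ((\<lambda>u. sl u x) ` {0..<x})"
          by (rule bdd_aboveI2[where M="sl x 1"]) (use bdd x in auto)
        have "\<exists>u\<in>{0..<x}. L x - e < sl u x"
          using less_cSup_iff[OF ne bb, of "L x - e"] \<open>L x - e < L x\<close> unfolding L_def by simp
        then show ?thesis using that by auto
      qed
      have d0: "0 < min (v - x) (x - u)" using u v by auto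
      have "\<forall>y. y \<noteq> x \<and> dist y x < min (v - x) (x - u) \<longrightarrow> dist ((f y - f x) / (y - x)) (R x) < e"
      proof (intro allI impI)
        fix y assume y: "y \<noteq> x \<and> dist y x < min (v - x) (x - u)"
        have q: "(f y - f x) / (y - x) = sl x y" unfolding sl_def by simp
        show "dist ((f y - f x) / (y - x)) (R x) < e"
        proof (cases "y > x")
          case True
          have "sl x y \<le> sl x v"
          proof (cases "y = v")
            case False
            then show ?thesis using s1[of x y v] True y u v x by (auto simp: dist_real_def)
          qed simp
          moreover have "R x \<le> sl x y" using Rlo[of x y] True y v x by (auto simp: dist_real_def)
          ultimately show ?thesis using v q by (auto simp: dist_real_def)
        next
          case False
          then have yx: "y < x" using y by auto
          have "sl u x \<le> sl y x"
          proof (cases "y = u")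
            case False
            then show ?thesis using s2[of u y x] yx y u v x by (auto simp: dist_real_def)
          qed simp
          moreover have "sl y x \<le> L x" using Lup[of y x] yx y u x by (auto simp: dist_real_def)
          ultimately show ?thesis using u q eq slsym[of x y] by (auto simp: dist_real_def)
        qed
      qed
      then show "\<forall>\<^sub>F y in at x. dist ((f y - f x) / (y - x)) (R x) < e"
        unfolding eventually_at using d0 by blast
    qed
    then have "(f has_real_derivative R x) (at x)" by (simp add: has_field_derivative_iff)
    then show ?thesis using real_differentiable_def by blast
  qed
  define N where "N = {x\<in>{0<..<1}. \<not> f differentiable (at x)}"
  have lt: "L x < R x" if "x \<in> N" for x
    using that diff LR unfolding N_def by force
  define q where "q x = (SOME r::rat. L x < of_rat r \<and> of_rat r < R x)" for x
  have qx: "L x < of_rat (q x) \<and> of_rat (q x) < R x" if "x \<in> N" for x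
    unfolding q_def by (rule someI_ex) (use of_rat_dense lt[OF that] in blast)
  have "inj_on q N"
  proof (rule inj_onI)
    fix x y assume xy: "x \<in> N" "y \<in> N" "q x = q y"
    show "x = y"
    proof (rule ccontr)
      assume "x \<noteq> y"
      then consider "x < y" | "y < x" by linarith
      then show False
      proof cases
        case 1
        then have "R x \<le> L y" using RL[of x y] xy unfolding N_def by force
        then show False using qx[of x] qx[of y] xy by auto
      next
        case 2
        then have "R y \<le> L x" using RL[of y x] xy unfolding N_def by force
        then show False using qx[of x] qx[of y] xy by auto
      qed
    qed
  qed
  then show ?thesis unfolding N_def[symmetric] by (rule countableI')
qed



lemma sign_switch_cong:
  assumes "\<forall>x\<in>{c0..d0}. D x = D' x"
  shows "sign_switch D c0 d0 p = sign_switch D' c0 d0 p"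
proof -
  obtain c d where p: "p = (c, d)" by (cases p)
  have A: "sign_switch D' c0 d0 (c,d)" if h: "sign_switch D c0 d0 (c,d)" "\<forall>x\<in>{c0..d0}. D x = D' x" for D D'
  proof -
    from h(1) obtain \<delta> where hh: "c0 < c" "c \<le> d" "d < d0" "\<forall>x\<in>{c..d}. D x = 0" "\<delta> > 0"
      "\<delta> \<le> min (c - c0) (d0 - d)" "\<forall>x\<in>{0<..\<delta>}. D (c - x) * D (d + x) < 0"
      unfolding sign_switch_def by auto
    have "\<forall>x\<in>{c..d}. D' x = 0" using hh h(2) by auto
    moreover have "\<forall>x\<in>{0<..\<delta>}. D' (c - x) * D' (d + x) < 0"
    proof
      fix x assume x: "x \<in> {0<..\<delta>}"
      have "D (c - x) = D' (c - x)" "D (d + x) = D' (d + x)" using h(2) x hh by auto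
      then show "D' (c - x) * D' (d + x) < 0" using hh(7) x by metis
    qed
    ultimately show ?thesis unfolding sign_switch_def using hh by auto
  qed
  show ?thesis unfolding p using A[of D D'] A[of D' D] assms by auto
qed

lemma nswitch_cong:
  assumes "\<forall>x\<in>{c0..d0}. D x = D' x"
  shows "nswitch D c0 d0 = nswitch D' c0 d0"
proof -
  have "sign_switch D c0 d0 = sign_switch D' c0 d0" using sign_switch_cong[OF assms] by (rule ext)
  then show ?thesis unfolding nswitch_def by simp
qed

lemma nswitch_scale:
  assumes "k \<noteq> (0::real)"
  shows "nswitch (\<lambda>x. k * D x) c0 d0 = nswitch D c0 d0"
proof -
  have "sign_switch (\<lambda>x. k * D x) c0 d0 p = sign_switch D c0 d0 p" for p
  proof -
    have e: "k * D u * (k * D v) < 0 \<longleftrightarrow> D u * D v < 0" for u v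
    proof -
      have "k * D u * (k * D v) = (k*k) * (D u * D v)" by (simp add: algebra_simps)
      moreover have "k * k > 0" using assms by (cases "k > 0") (auto simp: zero_less_mult_iff)
      ultimately show ?thesis by (metis mult_less_cancel_left_pos mult_zero_right)
    qed
    show ?thesis unfolding sign_switch_def using assms e by (cases p) simp
  qed
  then have "sign_switch (\<lambda>x. k * D x) c0 d0 = sign_switch D c0 d0" by (rule ext)
  then show ?thesis unfolding nswitch_def by simp
qed

lemma nswitch_le1:
  assumes iv: "\<And>x y z. c0 < x \<Longrightarrow> x \<le> z \<Longrightarrow> z \<le> y \<Longrightarrow> y < d0 \<Longrightarrow> D x = 0 \<Longrightarrow> D y = 0 \<Longrightarrow> D z = 0"
  shows "nswitch D c0 d0 \<le> 1"
proof -
  let ?S = "{p. sign_switch D c0 d0 p}"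
  have uniq: "p1 = p2" if "p1 \<in> ?S" "p2 \<in> ?S" for p1 p2
  proof -
    obtain c1 d1 c2 d2 where p: "p1 = (c1,d1)" "p2 = (c2,d2)" by (cases p1, cases p2)
    from that obtain \<delta>1 where h1: "c0 < c1" "c1 \<le> d1" "d1 < d0" "\<forall>x\<in>{c1..d1}. D x = 0" "\<delta>1 > 0"
      "\<delta>1 \<le> min (c1 - c0) (d0 - d1)" "\<forall>x\<in>{0<..\<delta>1}. D (c1 - x) * D (d1 + x) < 0"
      unfolding sign_switch_def p by auto
    from that obtain \<delta>2 where h2: "c0 < c2" "c2 \<le> d2" "d2 < d0" "\<forall>x\<in>{c2..d2}. D x = 0" "\<delta>2 > 0"
      "\<delta>2 \<le> min (c2 - c0) (d0 - d2)" "\<forall>x\<in>{0<..\<delta>2}. D (c2 - x) * D (d2 + x) < 0"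
      unfolding sign_switch_def p by auto
    have D0: "D c1 = 0" "D d1 = 0" "D c2 = 0" "D d2 = 0" using h1 h2 by auto
    have gen_d: False if "c0 < ca" "ca \<le> da" "da < db" "db < d0" "D da = 0" "D db = 0" "\<delta> > 0"
        "\<forall>x\<in>{0<..\<delta>}. D (ca - x) * D (da + x) < 0" for ca da db \<delta>
    proof -
      let ?x = "min \<delta> (db - da)"
      have "D (da + ?x) = 0" by (rule iv[where x=da and y=db]) (use that in auto)
      moreover have "D (ca - ?x) * D (da + ?x) < 0" using that(8) that by auto
      ultimately show False by simp
    qed
    have gen_c: False if "c0 < ca" "ca < cb" "cb \<le> db" "db < d0" "D ca = 0" "D cb = 0" "\<delta> > 0"
        "\<forall>x\<in>{0<..\<delta>}. D (cb - x) * D (db + x) < 0" for ca cb db \<delta>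
    proof -
      let ?x = "min \<delta> (cb - ca)"
      have "D (cb - ?x) = 0" by (rule iv[where x=ca and y=cb]) (use that in auto)
      moreover have "D (cb - ?x) * D (db + ?x) < 0" using that(8) that by auto
      ultimately show False by simp
    qed
    have "d1 = d2"
    proof (rule ccontr)
      assume "d1 \<noteq> d2"
      then consider "d1 < d2" | "d2 < d1" by linarith
      then show False
        by cases (use gen_d[of c1 d1 d2 \<delta>1] gen_d[of c2 d2 d1 \<delta>2] h1 h2 D0 in auto)
    qed
    moreover have "c1 = c2"
    proof (rule ccontr)
      assume "c1 \<noteq> c2"
      then consider "c1 < c2" | "c2 < c1" by linarith
      then show False
        by cases (use gen_c[of c1 c2 d2 \<delta>2] gen_c[of c2 c1 d1 \<delta>1] h1 h2 D0 in auto)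
    qed
    ultimately show ?thesis using p by simp
  qed
  show ?thesis
  proof (cases "?S = {}")
    case True
    then show ?thesis unfolding nswitch_def True by (simp add: zero_enat_def[symmetric])
  next
    case False
    then obtain p where "p \<in> ?S" by blast
    then have Sp: "?S = {p}" using uniq by blast
    show ?thesis unfolding nswitch_def Sp by (simp add: one_enat_def)
  qed
qed

lemma nswitch_ge3:
  assumes "sign_switch D c0 d0 p1" "sign_switch D c0 d0 p2" "sign_switch D c0 d0 p3"
    "p1 \<noteq> p2" "p1 \<noteq> p3" "p2 \<noteq> p3"
  shows "nswitch D c0 d0 \<ge> 3"
proof (cases "finite {p. sign_switch D c0 d0 p}")
  case True
  have "card {p1,p2,p3} \<le> card {p. sign_switch D c0 d0 p}"
    by (rule card_mono[OF True]) (use assms in auto)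
  moreover have "card {p1,p2,p3} = 3" using assms by auto
  ultimately show ?thesis unfolding nswitch_def using True
    by (simp add: numeral_eq_enat)
next
  case False
  then show ?thesis unfolding nswitch_def by simp
qed

lemma regular_switch:
  fixes \<rho> Q D :: "real \<Rightarrow> real"
  assumes z: "0 < z" "z < e" and Q: "\<forall>x\<in>{0..e}. Q x > 0"
    and der: "(\<rho> has_real_derivative d) (at z)" and d: "d \<noteq> 0" and rz: "\<rho> z = b"
    and D: "\<forall>x\<in>{0..e}. D x = Q x * (\<rho> x - b)"
  shows "sign_switch D 0 e (z,z)"
proof -
  have "((\<lambda>y. (\<rho> y - \<rho> z) / (y - z)) \<longlongrightarrow> d) (at z)"
    using der by (simp add: has_field_derivative_iff)
  moreover have "\<bar>d\<bar> > 0" using d by simp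
  ultimately have "\<forall>\<^sub>F y in at z. dist ((\<rho> y - \<rho> z) / (y - z)) d < \<bar>d\<bar>"
    by (rule tendstoD)
  then obtain r where r: "r > 0" "\<And>y. y \<noteq> z \<Longrightarrow> dist y z < r \<Longrightarrow> dist ((\<rho> y - \<rho> z) / (y - z)) d < \<bar>d\<bar>"
    unfolding eventually_at by auto
  have sgn: "(\<rho> y - b) / (y - z) * d > 0" if "y \<noteq> z" "dist y z < r" for y
  proof -
    define q where "q = (\<rho> y - b) / (y - z)"
    have "\<bar>q - d\<bar> < \<bar>d\<bar>" using r(2)[OF that] rz by (simp add: dist_real_def q_def)
    then have "q * d > 0" by (cases "d > 0") (auto simp: abs_less_iff zero_less_mult_iff)
    then show ?thesis unfolding q_def .
  qed
  define \<delta> where "\<delta> = min (r/2) (min z (e - z))"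
  show ?thesis unfolding sign_switch_def
  proof (simp, intro conjI exI[of _ \<delta>])
    show "0 < z" "z < e" using z by auto
    show "D z = 0" using D z rz by auto
    show "0 < \<delta>" using r z unfolding \<delta>_def by auto
    show "\<delta> \<le> z" "\<delta> \<le> e - z" unfolding \<delta>_def by auto
    show "\<forall>x\<in>{0<..\<delta>}. D (z - x) * D (z + x) < 0"
    proof
      fix x assume x: "x \<in> {0<..\<delta>}"
      have xr: "x < r" using x r unfolding \<delta>_def by auto
      have s1: "(\<rho> (z - x) - b) / ((z - x) - z) * d > 0" by (rule sgn) (use x xr in \<open>auto simp: dist_real_def\<close>)
      have s2: "(\<rho> (z + x) - b) / ((z + x) - z) * d > 0" by (rule sgn) (use x xr in \<open>auto simp: dist_real_def\<close>)
      have x0: "x > 0" using x by auto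
      have "(\<rho> (z - x) - b) * d < 0" using s1 x0 by (simp add: divide_simps mult_less_0_iff zero_less_mult_iff split: if_splits)
      moreover have "(\<rho> (z + x) - b) * d > 0" using s2 x0 by (simp add: divide_simps split: if_splits)
      ultimately have "(\<rho> (z - x) - b) * (\<rho> (z + x) - b) < 0"
        by (auto simp: mult_less_0_iff zero_less_mult_iff)
      moreover have "Q (z - x) > 0" "Q (z + x) > 0" using Q x unfolding \<delta>_def by auto
      moreover have "D (z - x) = Q (z - x) * (\<rho> (z - x) - b)" "D (z + x) = Q (z + x) * (\<rho> (z + x) - b)"
        using D x unfolding \<delta>_def by auto
      ultimately show "D (z - x) * D (z + x) < 0"
        by (simp add: mult_less_0_iff zero_less_mult_iff)
    qed
  qed
qed



lemma negligible_countable_real: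
  fixes S :: "real set"
  assumes "countable S" shows "negligible S"
proof -
  have "S = \<Union>((\<lambda>x. {x}) ` S)" by auto
  moreover have "negligible (\<Union>((\<lambda>x. {x}) ` S))"
    by (rule negligible_countable_Union) (use assms in auto)
  ultimately show ?thesis by simp
qed

lemma nonmono_three:
  fixes P Q :: "real \<Rightarrow> real"
  assumes e: "e > 0"
    and cP: "continuous_on {0..e} P" and cQ: "continuous_on {0..e} Q"
    and Qpos: "\<forall>x\<in>{0..e}. Q x > 0" and Pnn: "\<forall>x\<in>{0..e}. P x \<ge> 0"
    and r0: "P 0 = Q 0" and re: "P e = 0"
    and rle: "\<forall>x\<in>{0..e}. P x \<le> Q x"
    and K: "countable K"
    and dif: "\<forall>x\<in>{0<..<e} - K. P differentiable (at x) \<and> Q differentiable (at x)"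
    and x12: "x1 \<in> {0..e}" "x2 \<in> {0..e}" "x1 \<le> x2" "P x1 / Q x1 < P x2 / Q x2"
  shows "\<exists>b>0. nswitch (\<lambda>x. P x - b * Q x) 0 e \<ge> 3"
proof -
  define \<rho> where "\<rho> x = P x / Q x" for x
  have cr: "continuous_on {0..e} \<rho>" unfolding \<rho>_def
    by (intro continuous_intros cP cQ) (use Qpos in force)
  have r0': "\<rho> 0 = 1" using r0 Qpos e unfolding \<rho>_def by force
  have re': "\<rho> e = 0" using re unfolding \<rho>_def by simp
  have rle': "\<rho> x \<le> 1" if "x \<in> {0..e}" for x using rle Qpos that unfolding \<rho>_def by (simp add: divide_le_eq_1)
  have r12: "\<rho> x1 < \<rho> x2" using x12 unfolding \<rho>_def by simp
  have rge: "\<rho> x1 \<ge> 0" using Pnn[rule_format, of x1] Qpos[rule_format, of x1] x12 unfolding \<rho>_def by simp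
  define Crit where "Crit = {x \<in> {0<..<e} - K. (\<rho> has_real_derivative 0) (at x)}"
  define Bad where "Bad = \<rho> ` ({0<..<e} \<inter> K) \<union> \<rho> ` Crit"
  have nB: "negligible Bad" unfolding Bad_def
  proof (rule negligible_Un)
    show "negligible (\<rho> ` ({0<..<e} \<inter> K))"
      by (rule negligible_countable_real) (use K in auto)
    show "negligible (\<rho> ` Crit)" by (rule sard1) (auto simp: Crit_def)
  qed
  have "\<not> {\<rho> x1<..<\<rho> x2} \<subseteq> Bad"
  proof
    assume "{\<rho> x1<..<\<rho> x2} \<subseteq> Bad"
    then have "negligible {\<rho> x1<..<\<rho> x2}" using negligible_subset nB by blast
    then have "negligible (box (\<rho> x1) (\<rho> x2))" by simp
    then show False using negligible_interval(2)[of "\<rho> x1" "\<rho> x2"] r12 by simp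
  qed
  then obtain b where b: "\<rho> x1 < b" "b < \<rho> x2" "b \<notin> Bad"
    by (metis greaterThanLessThan_iff subsetI)
  have b0: "b > 0" using b rge by linarith
  have b1: "b < 1" using b rle'[OF x12(2)] by linarith
  have reg: "\<exists>d. (\<rho> has_real_derivative d) (at z) \<and> d \<noteq> 0" if z: "z \<in> {0<..<e}" "\<rho> z = b" for z
  proof -
    have "z \<notin> K" using z b(3) unfolding Bad_def by auto
    then obtain dP dQ where dP: "(P has_real_derivative dP) (at z)" and dQ: "(Q has_real_derivative dQ) (at z)"
    proof -
      have "z \<in> {0<..<e} - K" using z \<open>z \<notin> K\<close> by auto
      then have "P differentiable (at z)" "Q differentiable (at z)" using dif by auto
      then show ?thesis using that by (auto simp: real_differentiable_def)
    qed
    have Qz: "Q z \<noteq> 0" using Qpos[rule_format, of z] z by auto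
    have "(\<rho> has_real_derivative (dP * Q z - P z * dQ) / (Q z * Q z)) (at z)"
      unfolding \<rho>_def by (rule DERIV_divide[OF dP dQ Qz])
    moreover have "(dP * Q z - P z * dQ) / (Q z * Q z) \<noteq> 0"
    proof
      assume "(dP * Q z - P z * dQ) / (Q z * Q z) = 0"
      with calculation have "z \<in> Crit" using z \<open>z \<notin> K\<close> unfolding Crit_def by auto
      then show False using z b(3) unfolding Bad_def by auto
    qed
    ultimately show ?thesis by blast
  qed
  define D where "D x = P x - b * Q x" for x
  have DQ: "\<forall>x\<in>{0..e}. D x = Q x * (\<rho> x - b)"
    using Qpos unfolding D_def \<rho>_def by (auto simp: field_simps)
  have sw: "sign_switch D 0 e (z, z)" if z: "z \<in> {0<..<e}" "\<rho> z = b" for z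
  proof -
    obtain d where "(\<rho> has_real_derivative d) (at z)" "d \<noteq> 0" using reg[OF z] by blast
    then show ?thesis using regular_switch[of z e Q \<rho> d b D] z Qpos DQ by auto
  qed
  have c1: "continuous_on {0..x1} \<rho>" "continuous_on {x1..x2} \<rho>" "continuous_on {x2..e} \<rho>"
    using x12 by (auto intro: continuous_on_subset[OF cr])
  obtain z1 where z1: "0 \<le> z1" "z1 \<le> x1" "\<rho> z1 = b"
    using IVT2'[of \<rho> x1 b 0, OF _ _ _ c1(1)] b r0' b1 x12 by auto
  obtain z2 where z2: "x1 \<le> z2" "z2 \<le> x2" "\<rho> z2 = b"
    using IVT'[of \<rho> x1 b x2, OF _ _ _ c1(2)] b x12 by auto
  obtain z3 where z3: "x2 \<le> z3" "z3 \<le> e" "\<rho> z3 = b"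
    using IVT2'[of \<rho> e b x2, OF _ _ _ c1(3)] b re' b0 x12 by auto
  have z1': "0 < z1" "z1 < x1" using z1 b r0' b1 by (auto simp: order.order_iff_strict)
  have z2': "x1 < z2" "z2 < x2" using z2 b by (auto simp: order.order_iff_strict)
  have z3': "x2 < z3" "z3 < e" using z3 b re' b0 by (auto simp: order.order_iff_strict)
  have "nswitch D 0 e \<ge> 3"
  proof (rule nswitch_ge3[OF sw sw sw])
    show "z1 \<in> {0<..<e}" "z2 \<in> {0<..<e}" "z3 \<in> {0<..<e}" using z1' z2' z3' by auto
    show "\<rho> z1 = b" "\<rho> z2 = b" "\<rho> z3 = b" using z1 z2 z3 by auto
    show "(z1, z1) \<noteq> (z2, z2)" "(z1, z1) \<noteq> (z3, z3)" "(z2, z2) \<noteq> (z3, z3)"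
      using z1' z2' z3' by auto
  qed
  then show ?thesis using b0 unfolding D_def by auto
qed



lemma Dbreve_facts:
  assumes "Dbreve f"
  shows "continuous_on {0..1} f" "convex_on {0..1} f"
    "\<And>x y. x \<in> {0..1} \<Longrightarrow> y \<in> {0..1} \<Longrightarrow> x < y \<Longrightarrow> f y < f x"
    "\<And>x. x \<in> {0..1} \<Longrightarrow> 0 \<le> f x" "\<And>x. x \<in> {0..1} \<Longrightarrow> f x \<le> 1"
    "f 0 = 1" "f 1 = 0"
    "\<And>x. 0 \<le> x \<Longrightarrow> x < 1 \<Longrightarrow> 0 < f x"
    "\<And>x y. x \<in> {0..1} \<Longrightarrow> y \<in> {0..1} \<Longrightarrow> x \<le> y \<Longrightarrow> f y \<le> f x"
proof -
  note d = assms[unfolded Dbreve_def]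
  show "continuous_on {0..1} f" "convex_on {0..1} f" "f 0 = 1" "f 1 = 0" using d by auto
  show dec: "\<And>x y. x \<in> {0..1} \<Longrightarrow> y \<in> {0..1} \<Longrightarrow> x < y \<Longrightarrow> f y < f x" using d by auto
  show "\<And>x. x \<in> {0..1} \<Longrightarrow> 0 \<le> f x" "\<And>x. x \<in> {0..1} \<Longrightarrow> f x \<le> 1" using d by (auto simp: image_subset_iff)
  show "\<And>x. 0 \<le> x \<Longrightarrow> x < 1 \<Longrightarrow> 0 < f x"
  proof -
    fix x :: real assume "0 \<le> x" "x < 1"
    then have "f 1 < f x" using dec[of x 1] by auto
    then show "0 < f x" using d by auto
  qed
  show "\<And>x y. x \<in> {0..1} \<Longrightarrow> y \<in> {0..1} \<Longrightarrow> x \<le> y \<Longrightarrow> f y \<le> f x"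
    using dec by (metis order.order_iff_strict order.refl)
qed

lemma mono_or_three:
  fixes P Q :: "real \<Rightarrow> real"
  assumes e: "e > 0"
    and cP: "continuous_on {0..e} P" and cQ: "continuous_on {0..e} Q"
    and Qpos: "\<forall>x\<in>{0..e}. Q x > 0" and Pnn: "\<forall>x\<in>{0..e}. P x \<ge> 0"
    and r0: "P 0 = Q 0" and re: "P e = 0"
    and rle: "\<forall>x\<in>{0..e}. P x \<le> Q x"
    and K: "countable K"
    and dif: "\<forall>x\<in>{0<..<e} - K. P differentiable (at x) \<and> Q differentiable (at x)"
  shows "(\<forall>b. nswitch (\<lambda>x. P x - b * Q x) 0 e \<le> 1) \<or> (\<exists>b>0. nswitch (\<lambda>x. P x - b * Q x) 0 e \<ge> 3)"
proof (cases "\<exists>x1 x2. x1 \<in> {0..e} \<and> x2 \<in> {0..e} \<and> x1 \<le> x2 \<and> P x1 / Q x1 < P x2 / Q x2")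
  case True
  then obtain x1 x2 where "x1 \<in> {0..e}" "x2 \<in> {0..e}" "x1 \<le> x2" "P x1 / Q x1 < P x2 / Q x2" by blast
  then show ?thesis using nonmono_three[OF assms] by blast
next
  case False
  have "nswitch (\<lambda>x. P x - b * Q x) 0 e \<le> 1" for b
  proof (rule nswitch_le1)
    fix x y z assume h: "0 < x" "x \<le> z" "z \<le> y" "y < e" "P x - b * Q x = 0" "P y - b * Q y = 0"
    have Q: "Q x > 0" "Q y > 0" "Q z > 0" using Qpos h by auto
    have "P x / Q x = b" "P y / Q y = b" using h(5,6) Q by (auto simp: field_simps)
    moreover have "\<not> P x / Q x < P z / Q z" "\<not> P z / Q z < P y / Q y"
    proof -
      have r: "x \<in> {0..e}" "z \<in> {0..e}" "y \<in> {0..e}" using h by auto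
      show "\<not> P x / Q x < P z / Q z" using False r h(2) by blast
      show "\<not> P z / Q z < P y / Q y" using False r h(3) by blast
    qed
    ultimately have "P z / Q z = b" by linarith
    then show "P z - b * Q z = 0" using Q by (auto simp: field_simps)
  qed
  then show ?thesis by blast
qed

lemma crossing_self:
  assumes fD: "Dbreve f"
  shows "crossing f f \<noteq> 2"
proof
  assume c2: "crossing f f = 2"
  note F = Dbreve_facts[OF fD]
  define Nsw where "Nsw a b = nswitch (\<lambda>x. f (a * x) - b * f x) 0 (min 1 (1 / a))" for a b
  have cr: "crossing f f = (SUP p\<in>{p. fst p > 0 \<and> snd p > 0}. Nsw (fst p) (snd p))"
    unfolding crossing_def Nsw_def by simp
  define NF where "NF = {x\<in>{0<..<1}. \<not> f differentiable (at x)}"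
  have cNF: "countable NF" unfolding NF_def by (rule convex_diff_countable[OF F(2)])
  have dcomp: "(\<lambda>x. f (a * x)) differentiable (at x)" if fd: "f differentiable (at (a * x))" for a x
  proof -
    obtain d where d: "(f has_real_derivative d) (at (a * x))" using fd by (auto simp: real_differentiable_def)
    have "((\<lambda>x. a * x) has_real_derivative a) (at x)" by (auto intro!: derivative_eq_intros)
    from DERIV_chain2[OF d this] show ?thesis by (auto simp: real_differentiable_def)
  qed
  have claim: "(\<forall>b>0. Nsw a b \<le> 1) \<or> (\<exists>b>0. Nsw a b \<ge> 3)" if a: "a > 0" for a
  proof -
    consider "a = 1" | "a > 1" | "a < 1" by linarith
    then show ?thesis
    proof cases
      case 1
      have "Nsw a b \<le> 1" for b
        unfolding Nsw_def 1
      proof (simp, rule nswitch_le1)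
        fix x y z :: real assume h: "0 < x" "x \<le> z" "z \<le> y" "y < 1" "f x - b * f x = 0" "f y - b * f y = 0"
        have "f x > 0" using F(8) h by auto
        then have "b = 1" using h(5) by (auto simp: algebra_simps)
        then show "f z - b * f z = 0" by simp
      qed
      then show ?thesis by blast
    next
      case 2
      have m: "min 1 (1 / a) = 1 / a" using 2 by simp
      have e1: "1 / a < 1" using 2 by simp
      have "(\<forall>b. nswitch (\<lambda>x. f (a * x) - b * f x) 0 (1/a) \<le> 1) \<or>
            (\<exists>b>0. nswitch (\<lambda>x. f (a * x) - b * f x) 0 (1/a) \<ge> 3)"
      proof (rule mono_or_three[where K="NF \<union> (\<lambda>y. y / a) ` NF"])
        show "0 < 1 / a" using a by simp
        show "continuous_on {0..1/a} (\<lambda>x. f (a * x))"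
          by (rule continuous_on_compose2[OF F(1)]) (use a in \<open>auto intro!: continuous_intros simp: field_simps\<close>)
        show "continuous_on {0..1/a} f" by (rule continuous_on_subset[OF F(1)]) (use e1 in auto)
        show "\<forall>x\<in>{0..1/a}. 0 < f x" using F(8) e1 by auto
        show "\<forall>x\<in>{0..1/a}. 0 \<le> f (a * x)"
          using F(4) a by (auto simp: field_simps)
        show "f (a * 0) = f 0" by simp
        show "f (a * (1 / a)) = 0" using a F(7) by simp
        show "\<forall>x\<in>{0..1/a}. f (a * x) \<le> f x"
        proof
          fix x assume x: "x \<in> {0..1/a}"
          then have "a * x \<le> 1" using a by (auto simp: field_simps)
          moreover have "x \<le> a * x" using x 2 mult_right_mono[of 1 a x] by auto
          ultimately show "f (a * x) \<le> f x" using F(9)[of x "a * x"] x e1 a by auto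
        qed
        show "countable (NF \<union> (\<lambda>y. y / a) ` NF)" using cNF by auto
        show "\<forall>x\<in>{0<..<1/a} - (NF \<union> (\<lambda>y. y / a) ` NF). (\<lambda>x. f (a * x)) differentiable (at x) \<and> f differentiable (at x)"
        proof
          fix x assume x: "x \<in> {0<..<1/a} - (NF \<union> (\<lambda>y. y / a) ` NF)"
          have ax: "0 < a * x" "a * x < 1" using x a by (auto simp: field_simps)
          have "a * x \<notin> NF" using x a by (auto simp: image_iff)
          then have "f differentiable (at (a * x))" using ax unfolding NF_def by auto
          moreover have "f differentiable (at x)" using x e1 unfolding NF_def by auto
          ultimately show "(\<lambda>x. f (a * x)) differentiable (at x) \<and> f differentiable (at x)" using dcomp by auto
        qed
      qed
      then show ?thesis unfolding Nsw_def m by auto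
    next
      case 3
      have m: "min 1 (1 / a) = 1" using 3 a by simp
      have eqf: "(\<lambda>x. f (a * x) - b * f x) = (\<lambda>x. (- b) * (f x - (1 / b) * f (a * x)))" if "b > 0" for b
        using that by (auto simp: field_simps)
      have "(\<forall>b. nswitch (\<lambda>x. f x - b * f (a * x)) 0 1 \<le> 1) \<or>
            (\<exists>b>0. nswitch (\<lambda>x. f x - b * f (a * x)) 0 1 \<ge> 3)"
      proof (rule mono_or_three[where K="NF \<union> (\<lambda>y. y / a) ` NF"])
        show "(0::real) < 1" by simp
        show "continuous_on {0..1} (\<lambda>x. f (a * x))"
          by (rule continuous_on_compose2[OF F(1)]) (use a 3 in \<open>auto intro!: continuous_intros mult_le_one\<close>)
        show "continuous_on {0..1} f" by (rule F(1))
        show "\<forall>x\<in>{0..1}. 0 < f (a * x)"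
        proof
          fix x :: real assume "x \<in> {0..1}"
          then have "0 \<le> a * x" using a by auto
          moreover have "a * x \<le> a" using \<open>x \<in> {0..1}\<close> a mult_left_mono[of x 1 a] by auto
          then have "a * x < 1" using 3 by linarith
          ultimately show "0 < f (a * x)" using F(8) by auto
        qed
        show "\<forall>x\<in>{0..1}. 0 \<le> f x" using F(4) by auto
        show "f 0 = f (a * 0)" by simp
        show "f 1 = 0" using F(7) .
        show "\<forall>x\<in>{0..1}. f x \<le> f (a * x)"
        proof
          fix x :: real assume x: "x \<in> {0..1}"
          then have "a * x \<le> x" "0 \<le> a * x" using a 3 mult_right_mono[of a 1 x] by auto
          then show "f x \<le> f (a * x)" using F(9)[of "a * x" x] x by auto
        qed
        show "countable (NF \<union> (\<lambda>y. y / a) ` NF)" using cNF by auto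
        show "\<forall>x\<in>{0<..<1} - (NF \<union> (\<lambda>y. y / a) ` NF). f differentiable (at x) \<and> (\<lambda>x. f (a * x)) differentiable (at x)"
        proof
          fix x :: real assume x: "x \<in> {0<..<1} - (NF \<union> (\<lambda>y. y / a) ` NF)"
          have ax: "0 < a * x" "a * x < 1" using x a 3 mult_strict_mono[of a 1 x 1] by auto
          have "a * x \<notin> NF" using x a by (auto simp: image_iff)
          then have "f differentiable (at (a * x))" using ax unfolding NF_def by auto
          moreover have "f differentiable (at x)" using x unfolding NF_def by auto
          ultimately show "f differentiable (at x) \<and> (\<lambda>x. f (a * x)) differentiable (at x)" using dcomp by auto
        qed
      qed
      then show ?thesis
      proof
        assume h: "\<forall>b. nswitch (\<lambda>x. f x - b * f (a * x)) 0 1 \<le> 1"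
        have "Nsw a b \<le> 1" if "b > 0" for b
        proof -
          have "Nsw a b = nswitch (\<lambda>x. (- b) * (f x - (1 / b) * f (a * x))) 0 1"
            unfolding Nsw_def m eqf[OF that] ..
          also have "\<dots> = nswitch (\<lambda>x. f x - (1 / b) * f (a * x)) 0 1"
            by (rule nswitch_scale) (use that in simp)
          finally show ?thesis using h[rule_format, of "1 / b"] by simp
        qed
        then show ?thesis by blast
      next
        assume "\<exists>b>0. nswitch (\<lambda>x. f x - b * f (a * x)) 0 1 \<ge> 3"
        then obtain b where b: "b > 0" "nswitch (\<lambda>x. f x - b * f (a * x)) 0 1 \<ge> 3" by blast
        have "Nsw a (1 / b) = nswitch (\<lambda>x. f x - b * f (a * x)) 0 1"
        proof -
          have "Nsw a (1 / b) = nswitch (\<lambda>x. (- (1 / b)) * (f x - (1 / (1 / b)) * f (a * x))) 0 1"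
            unfolding Nsw_def m eqf[of "1/b", OF divide_pos_pos[OF zero_less_one b(1)]] ..
          also have "\<dots> = nswitch (\<lambda>x. f x - (1 / (1 / b)) * f (a * x)) 0 1"
            by (rule nswitch_scale) (use b in simp)
          finally show ?thesis by simp
        qed
        then show ?thesis using b by (metis divide_pos_pos zero_less_one)
      qed
    qed
  qed
  have le2: "Nsw a b \<le> 2" if "a > 0" "b > 0" for a b
  proof -
    have "Nsw a b \<le> crossing f f" unfolding cr by (rule SUP_upper2[of "(a,b)"]) (use that in auto)
    then show ?thesis using c2 by simp
  qed
  have le1: "Nsw a b \<le> 1" if "a > 0" "b > 0" for a b
  proof -
    from claim[OF that(1)] show ?thesis
    proof
      assume "\<exists>b>0. Nsw a b \<ge> 3"
      then obtain b' where "b' > 0" "Nsw a b' \<ge> 3" by blast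
      then have "(3::enat) \<le> 2" using le2[of a b'] that order.trans by blast
      then show ?thesis by (simp add: numeral_eq_enat)
    qed (use that in auto)
  qed
  have "crossing f f \<le> 1" unfolding cr by (rule SUP_least) (use le1 in auto)
  then show False using c2 by (simp add: numeral_eq_enat one_enat_def)
qed



lemma inv_facts:
  assumes fD: "Dbreve f"
  shows "f ` {0..1} = {0..1}" "inj_on f {0..1}"
    "\<And>t. t \<in> {0..1} \<Longrightarrow> finv f t \<in> {0..1}"
    "\<And>t. t \<in> {0..1} \<Longrightarrow> f (finv f t) = t"
    "\<And>y. y \<in> {0..1} \<Longrightarrow> finv f (f y) = y"
    "continuous_on {0..1} (finv f)"
    "finv f 1 = 0"
proof -
  note F = Dbreve_facts[OF fD]
  show im: "f ` {0..1} = {0..1}"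
  proof
    show "f ` {0..1} \<subseteq> {0..1}" using F(4,5) by auto
    show "{0..1} \<subseteq> f ` {0..1}"
    proof
      fix t :: real assume t: "t \<in> {0..1}"
      obtain x where "0 \<le> x" "x \<le> 1" "f x = t"
        using IVT2'[of f 1 t 0] F(1,6,7) t by auto
      then show "t \<in> f ` {0..1}" by auto
    qed
  qed
  show inj: "inj_on f {0..1}"
  proof (rule inj_onI)
    fix x y assume "x \<in> {0..1}" "y \<in> {0..1}" "f x = f y"
    then show "x = y" using F(3)[of x y] F(3)[of y x] by (cases x y rule: linorder_cases) auto
  qed
  show "\<And>t. t \<in> {0..1} \<Longrightarrow> finv f t \<in> {0..1}"
    unfolding finv_def using im by (metis inv_into_into)
  show "\<And>t. t \<in> {0..1} \<Longrightarrow> f (finv f t) = t"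
    unfolding finv_def using im by (metis f_inv_into_f)
  show fg: "\<And>y. y \<in> {0..1} \<Longrightarrow> finv f (f y) = y"
    unfolding finv_def using inj by (metis inv_into_f_f)
  have "continuous_on (f ` {0..1}) (finv f)"
    by (rule continuous_on_inv[OF F(1)]) (use fg in auto)
  then show "continuous_on {0..1} (finv f)" using im by simp
  show "finv f 1 = 0" using fg[of 0] F(6) by simp
qed

lemma ftc_real:
  fixes F f :: "real \<Rightarrow> real"
  assumes "a \<le> b" "\<And>x. x \<in> {a..b} \<Longrightarrow> (F has_real_derivative f x) (at x within {a..b})"
  shows "(f has_integral F b - F a) {a..b}"
  by (rule fundamental_theorem_of_calculus[OF assms(1)])
     (use assms(2) in \<open>simp add: has_real_derivative_iff_has_vector_derivative\<close>)

lemma max_integral: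
  assumes "0 \<le> c" "c \<le> (1::real)"
  shows "integral {0..1} (\<lambda>x. max (c - x) 0) = c^2 / 2"
proof -
  have int: "(\<lambda>x. max (c - x) 0) integrable_on {0..1}"
    by (intro integrable_continuous_interval continuous_intros)
  have "integral {0..c} (\<lambda>x. max (c - x) 0) + integral {c..1} (\<lambda>x. max (c - x) 0) = integral {0..1} (\<lambda>x. max (c - x) 0)"
    by (rule Henstock_Kurzweil_Integration.integral_combine[OF assms int])
  moreover have "integral {c..1} (\<lambda>x. max (c - x) 0) = integral {c..1} (\<lambda>x. 0)"
    by (rule integral_cong) auto
  moreover have "integral {0..c} (\<lambda>x. max (c - x) 0) = integral {0..c} (\<lambda>x. c - x)"
    by (rule integral_cong) auto
  moreover have "((\<lambda>x. c - x) has_integral ((\<lambda>x. c * x - x^2/2) c - (\<lambda>x. c * x - x^2/2) 0)) {0..c}"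
    by (rule ftc_real[OF assms(1)]) (auto intro!: derivative_eq_intros)
  ultimately show ?thesis by (simp add: integral_unique power2_eq_square)
qed



lemma int_bound_mono:
  assumes fD: "Dbreve f" and s: "0 \<le> s" "s \<le> s'" "s' \<le> 1" and v: "f s' \<le> v" "v \<le> f s"
  shows "\<bar>integral {s..s'} f - v * (s' - s)\<bar> \<le> (f s - f s') * (s' - s)"
proof -
  note F = Dbreve_facts[OF fD]
  have int: "f integrable_on {s..s'}"
    by (rule integrable_continuous_interval, rule continuous_on_subset[OF F(1)]) (use s in auto)
  have "integral {s..s'} (\<lambda>y. f y - v) = integral {s..s'} f - v * (s' - s)"
  proof -
    have "integral {s..s'} (\<lambda>y. f y - v) = integral {s..s'} f - integral {s..s'} (\<lambda>y. v)"
      by (rule Henstock_Kurzweil_Integration.integral_diff[OF int]) (rule integrable_const_ivl)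
    then show ?thesis using s by simp
  qed
  moreover have "norm (integral {s..s'} (\<lambda>y. f y - v)) \<le> (f s - f s') * measure lborel {s..s'}"
  proof (rule integrable_bound[where a=s and b=s', unfolded cbox_interval])
    show "0 \<le> f s - f s'" using v by simp
    show "(\<lambda>y. f y - v) integrable_on {s..s'}" using int by (intro integrable_diff) auto
    fix y assume y: "y \<in> {s..s'}"
    then have "f y \<le> f s" "f s' \<le> f y" using F(9)[of s y] F(9)[of y s'] s by auto
    then show "norm (f y - v) \<le> f s - f s'" using v by auto
  qed
  ultimately show ?thesis using s by simp
qed

lemma R_est:
  assumes fD: "Dbreve f" and x: "x \<in> {0..1}" "x' \<in> {0..1}"
  defines "R \<equiv> \<lambda>x. integral {0..finv f x} f - x * finv f x"
  shows "\<bar>R x' - R x + (x' - x) * finv f x\<bar> \<le> \<bar>x' - x\<bar> * \<bar>finv f x' - finv f x\<bar>"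
proof -
  note F = Dbreve_facts[OF fD]
  note I = inv_facts[OF fD]
  define s where "s = finv f x"
  define s' where "s' = finv f x'"
  have s01: "s \<in> {0..1}" "s' \<in> {0..1}" unfolding s_def s'_def using I(3) x by auto
  have fs: "f s = x" "f s' = x'" unfolding s_def s'_def using I(4) x by auto
  have int: "\<And>a b. 0 \<le> a \<Longrightarrow> b \<le> 1 \<Longrightarrow> f integrable_on {a..b}"
    by (rule integrable_continuous_interval, rule continuous_on_subset[OF F(1)]) auto
  have comb: "integral {0..b} f = integral {0..a} f + integral {a..b} f" if "0 \<le> a" "a \<le> b" "b \<le> 1" for a b
    using Henstock_Kurzweil_Integration.integral_combine[of 0 a b f] int[of 0 b] that by auto
  consider "s \<le> s'" | "s' \<le> s" by linarith
  then show ?thesis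
  proof cases
    case 1
    have xx: "x' \<le> x" using F(9)[of s s'] s01 fs 1 by auto
    have "R x' - R x + (x' - x) * s = integral {s..s'} f - x' * (s' - s)"
      unfolding R_def s_def[symmetric] s'_def[symmetric] using comb[of s s'] s01 1
      by (simp add: algebra_simps)
    moreover have "\<bar>integral {s..s'} f - x' * (s' - s)\<bar> \<le> (f s - f s') * (s' - s)"
      by (rule int_bound_mono[OF fD]) (use s01 1 fs xx in auto)
    ultimately show ?thesis using fs xx 1 unfolding s_def[symmetric] s'_def[symmetric]
      by (simp add: abs_mult)
  next
    case 2
    have xx: "x \<le> x'" using F(9)[of s' s] s01 fs 2 by auto
    have "R x' - R x + (x' - x) * s = - (integral {s'..s} f - x' * (s - s'))"
      unfolding R_def s_def[symmetric] s'_def[symmetric] using comb[of s' s] s01 2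
      by (simp add: algebra_simps)
    moreover have "\<bar>integral {s'..s} f - x' * (s - s')\<bar> \<le> (f s' - f s) * (s - s')"
      by (rule int_bound_mono[OF fD]) (use s01 2 fs xx in auto)
    ultimately show ?thesis using fs xx 2 unfolding s_def[symmetric] s'_def[symmetric]
      by (simp add: abs_mult abs_minus_commute)
  qed
qed

lemma R_deriv:
  assumes fD: "Dbreve f" and x: "x \<in> {0..1}"
  defines "R \<equiv> \<lambda>x. integral {0..finv f x} f - x * finv f x"
  shows "(R has_real_derivative - finv f x) (at x within {0..1})"
proof -
  note I = inv_facts[OF fD]
  have "((\<lambda>y. (R y - R x) / (y - x) - (- finv f x)) \<longlongrightarrow> 0) (at x within {0..1})"
  proof (rule Lim_null_comparison)
    show "\<forall>\<^sub>F y in at x within {0..1}. norm ((R y - R x) / (y - x) - - finv f x) \<le> \<bar>finv f y - finv f x\<bar>"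
      unfolding eventually_at_filter
    proof (intro always_eventually allI impI)
      fix y assume y: "y \<noteq> x" "y \<in> {0..1}"
      have e: "(R y - R x) / (y - x) - - finv f x = (R y - R x + (y - x) * finv f x) / (y - x)"
        using y by (simp add: field_simps)
      have "\<bar>R y - R x + (y - x) * finv f x\<bar> \<le> \<bar>y - x\<bar> * \<bar>finv f y - finv f x\<bar>"
        using R_est[OF fD x y(2)] unfolding R_def .
      then show "norm ((R y - R x) / (y - x) - - finv f x) \<le> \<bar>finv f y - finv f x\<bar>"
        unfolding e using y by (simp add: abs_divide divide_le_eq mult.commute)
    qed
    have "(finv f \<longlongrightarrow> finv f x) (at x within {0..1})"
      using I(6) x by (simp add: continuous_on_def)
    then have "((\<lambda>y. finv f y - finv f x) \<longlongrightarrow> 0) (at x within {0..1})"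
      by (simp add: Lim_null[symmetric])
    then show "((\<lambda>y. \<bar>finv f y - finv f x\<bar>) \<longlongrightarrow> 0) (at x within {0..1})"
      by (rule tendsto_rabs_zero)
  qed
  then have "((\<lambda>y. ((R y - R x) / (y - x) - (- finv f x)) + (- finv f x)) \<longlongrightarrow> 0 + (- finv f x)) (at x within {0..1})"
    by (intro tendsto_add tendsto_const)
  then show ?thesis by (simp add: has_field_derivative_iff)
qed



lemma P_eq_R:
  assumes fD: "Dbreve f" and x: "x \<in> {0..1}"
  shows "integral {x..1} (finv f) = integral {0..finv f x} f - x * finv f x"
proof -
  define R where "R = (\<lambda>x. integral {0..finv f x} f - x * finv f x)"
  note I = inv_facts[OF fD]
  have "((\<lambda>t. - finv f t) has_integral R 1 - R x) {x..1}"
  proof (rule ftc_real)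
    show "x \<le> 1" using x by auto
    fix t assume t: "t \<in> {x..1}"
    then have "(R has_real_derivative - finv f t) (at t within {0..1})"
      unfolding R_def using R_deriv[OF fD, of t] x by auto
    then show "(R has_real_derivative - finv f t) (at t within {x..1})"
      by (rule DERIV_subset) (use x in auto)
  qed
  moreover have "R 1 = 0" unfolding R_def using I(7) by simp
  ultimately have "((\<lambda>t. - finv f t) has_integral - R x) {x..1}" by simp
  then have "(finv f has_integral R x) {x..1}"
    using has_integral_neg[of "\<lambda>t. - finv f t" "- R x" "{x..1}"] by simp
  then show ?thesis unfolding R_def by (rule integral_unique)
qed

lemma R_eq_max:
  assumes fD: "Dbreve f" and x: "x \<in> {0..1}"
  shows "integral {0..finv f x} f - x * finv f x = integral {0..1} (\<lambda>y. max (f y - x) 0)"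
proof -
  note F = Dbreve_facts[OF fD]
  note I = inv_facts[OF fD]
  define s where "s = finv f x"
  have s: "0 \<le> s" "s \<le> 1" "f s = x" unfolding s_def using I(3,4) x by auto
  have int: "(\<lambda>y. max (f y - x) 0) integrable_on {0..1}"
    by (rule integrable_continuous_interval) (intro continuous_intros F(1))
  have "integral {0..s} (\<lambda>y. max (f y - x) 0) + integral {s..1} (\<lambda>y. max (f y - x) 0) = integral {0..1} (\<lambda>y. max (f y - x) 0)"
    by (rule Henstock_Kurzweil_Integration.integral_combine[OF s(1,2) int])
  moreover have "integral {s..1} (\<lambda>y. max (f y - x) 0) = integral {s..1} (\<lambda>y. 0)"
  proof (rule integral_cong)
    fix y assume "y \<in> {s..1}"
    then have "f y \<le> f s" using F(9)[of s y] s by auto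
    then show "max (f y - x) 0 = 0" using s by auto
  qed
  moreover have "integral {0..s} (\<lambda>y. max (f y - x) 0) = integral {0..s} (\<lambda>y. f y - x)"
  proof (rule integral_cong)
    fix y assume "y \<in> {0..s}"
    then have "f s \<le> f y" using F(9)[of y s] s by auto
    then show "max (f y - x) 0 = f y - x" using s by auto
  qed
  moreover have "integral {0..s} (\<lambda>y. f y - x) = integral {0..s} f - integral {0..s} (\<lambda>y. x)"
  proof (rule Henstock_Kurzweil_Integration.integral_diff)
    show "f integrable_on {0..s}"
      by (rule integrable_continuous_interval, rule continuous_on_subset[OF F(1)]) (use s in auto)
  qed (rule integrable_const_ivl)
  ultimately show ?thesis using s unfolding s_def[symmetric] by (simp add: mult.commute)
qed

lemma Top_identity:
  assumes fD: "Dbreve f"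
  shows "int01 (Top f) = integral {0..1} (\<lambda>y. (f y)^2 / 2) / int01 f"
proof -
  note F = Dbreve_facts[OF fD]
  have "int01 (Top f) = integral {0..1} (\<lambda>x. integral {x..1} (finv f)) / int01 f"
    unfolding int01_def Top_def by simp
  also have "integral {0..1} (\<lambda>x. integral {x..1} (finv f)) = integral {0..1} (\<lambda>x. integral {0..1} (\<lambda>y. max (f y - x) 0))"
    by (rule integral_cong) (use P_eq_R[OF fD] R_eq_max[OF fD] in auto)
  also have "\<dots> = integral {0..1} (\<lambda>y. integral {0..1} (\<lambda>x. max (f y - x) 0))"
  proof -
    have c: "continuous_on (cbox (0::real,0::real) (1,1)) (\<lambda>(x,y). max (f y - x) 0)"
    proof -
      have "continuous_on ({0..1} \<times> {0..1}) (\<lambda>p::real\<times>real. max (f (snd p) - fst p) 0)"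
        by (intro continuous_intros continuous_on_compose2[OF F(1)]) auto
      then show ?thesis by (simp add: cbox_Pair_eq case_prod_beta)
    qed
    show ?thesis using integral_swap_continuous[OF c] by (simp add: cbox_interval)
  qed
  also have "\<dots> = integral {0..1} (\<lambda>y. (f y)^2 / 2)"
    by (rule integral_cong) (use max_integral F(4,5) in auto)
  finally show ?thesis .
qed



lemma cont_int:
  fixes f :: "real \<Rightarrow> real"
  assumes "continuous_on {0..1} f" "0 \<le> a" "b \<le> 1"
  shows "f integrable_on {a..b}"
  by (rule integrable_continuous_interval, rule continuous_on_subset[OF assms(1)]) (use assms in auto)

lemma int01_pos:
  assumes fD: "Dbreve f"
  shows "int01 f > 0"
proof -
  note F = Dbreve_facts[OF fD]
  have h: "f (1/2) > 0" using F(8) by auto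
  have "integral {0..1/2} f + integral {1/2..1} f = integral {0..1} f"
    by (rule Henstock_Kurzweil_Integration.integral_combine) (auto intro: cont_int[OF F(1)])
  moreover have "integral {1/2..1} f \<ge> 0"
    by (rule Henstock_Kurzweil_Integration.integral_nonneg) (auto intro: cont_int[OF F(1)] F(4))
  moreover have "integral {0..1/2::real} (\<lambda>x. f (1/2)) \<le> integral {0..1/2} f"
    by (rule Henstock_Kurzweil_Integration.integral_le) (auto intro: cont_int[OF F(1)] F(9))
  moreover have "integral {0..1/2::real} (\<lambda>x. f (1/2)) = f (1/2) / 2" by simp
  ultimately show ?thesis unfolding int01_def using h by linarith
qed

lemma crossing_cong:
  assumes "\<forall>x\<in>{0..1}. g x = g' x"
  shows "crossing f g = crossing f g'"
proof -
  have "nswitch (\<lambda>x. f (fst p * x) - snd p * g x) 0 (min 1 (1 / fst p)) =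
        nswitch (\<lambda>x. f (fst p * x) - snd p * g' x) 0 (min 1 (1 / fst p))" for p
    by (rule nswitch_cong) (use assms in auto)
  then show ?thesis unfolding crossing_def by simp
qed

theorem lemma4p6:
  fixes ft f g :: "real \<Rightarrow> real"
  assumes "Dbreve ft" and "Dbreve f" and "Dbreve g"
    and "dominated g f"
    and "\<forall>x\<in>{0..1}. ft x \<le> f x"
    and "\<forall>x\<in>{0..1}. ft x \<le> g (x / (int01 f / int01 g))"
  shows "int01 (Top f) - int01 (Top g) < 1 - int01 ft / int01 f"
proof -
  note Ff = Dbreve_facts[OF assms(2)]
  note Fg = Dbreve_facts[OF assms(3)]
  note Ft = Dbreve_facts[OF assms(1)]
  define F where "F = int01 f"
  define G where "G = int01 g"
  define H where "H = int01 ft"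
  define c where "c = F / G"
  define Af where "Af = integral {0..1} (\<lambda>y. (f y)^2 / 2)"
  define Ag where "Ag = integral {0..1} (\<lambda>y. (g y)^2 / 2)"
  define h2 where "h2 x = (g (x / c))^2 / 2" for x
  have F0: "F > 0" unfolding F_def by (rule int01_pos[OF assms(2)])
  have G0: "G > 0" unfolding G_def by (rule int01_pos[OF assms(3)])
  have gf: "\<forall>x\<in>{0..1}. g x \<le> f x" using assms(4) unfolding dominated_def by auto
  have GF: "G \<le> F" unfolding F_def G_def int01_def
    by (rule Henstock_Kurzweil_Integration.integral_le) (auto intro: cont_int Ff(1) Fg(1) gf[rule_format])
  have c1: "c \<ge> 1" unfolding c_def using GF G0 by simp
  have Tf: "int01 (Top f) = Af / F" unfolding Af_def F_def by (rule Top_identity[OF assms(2)])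
  have Tg: "int01 (Top g) = Ag / G" unfolding Ag_def G_def by (rule Top_identity[OF assms(3)])
  have hc: "continuous_on {0..c} h2" unfolding h2_def
    by (intro continuous_intros continuous_on_compose2[OF Fg(1)]) (use c1 in \<open>auto simp: field_simps\<close>)
  have scale: "integral {0..c} h2 = c * Ag"
  proof -
    have int: "((\<lambda>y. (g y)^2 / 2) has_integral Ag) {0..1}"
      unfolding Ag_def by (rule integrable_integral) (auto intro!: cont_int continuous_intros Fg(1))
    have "((\<lambda>x. (\<lambda>y. (g y)^2 / 2) ((1/c) * x)) has_integral (1 / \<bar>1/c\<bar>) *\<^sub>R Ag) ((\<lambda>x. x / (1/c)) ` {0..1})"
      by (rule has_integral_stretch_real[OF int]) (use c1 in auto)
    moreover have "(\<lambda>x. x / (1/c)) ` {0..1} = {0..c}"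
    proof
      show "(\<lambda>x. x / (1/c)) ` {0..1} \<subseteq> {0..c}" using c1 by (auto simp: mult_le_cancel_right1)
      show "{0..c} \<subseteq> (\<lambda>x. x / (1/c)) ` {0..1}"
      proof
        fix x assume x: "x \<in> {0..c}"
        then have "x / c \<in> {0..1}" using c1 by auto
        moreover have "x = (x / c) / (1 / c)" using c1 by simp
        ultimately show "x \<in> (\<lambda>x. x / (1/c)) ` {0..1}" by blast
      qed
    qed
    moreover have "(\<lambda>x. (\<lambda>y. (g y)^2 / 2) ((1/c) * x)) = h2" unfolding h2_def by auto
    ultimately have "(h2 has_integral c * Ag) {0..c}" using c1 by simp
    then show ?thesis by (rule integral_unique)
  qed
  have hc1: "continuous_on {0..1} h2" by (rule continuous_on_subset[OF hc]) (use c1 in auto)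
  have split: "integral {0..1} h2 + integral {1..c} h2 = integral {0..c} h2"
    by (rule Henstock_Kurzweil_Integration.integral_combine) (use c1 hc in \<open>auto intro: integrable_continuous_interval\<close>)
  have pw: "integral {0..1} (\<lambda>y. (f y)^2 / 2) - integral {0..1} h2 \<le> F - H"
  proof -
    have "integral {0..1} (\<lambda>y. (f y)^2 / 2 - h2 y) \<le> integral {0..1} (\<lambda>y. f y - ft y)"
    proof (rule Henstock_Kurzweil_Integration.integral_le)
      show "(\<lambda>y. (f y)^2 / 2 - h2 y) integrable_on {0..1}"
        by (intro integrable_diff cont_int continuous_intros Ff(1) hc1) auto
      show "(\<lambda>y. f y - ft y) integrable_on {0..1}"
        by (intro integrable_diff cont_int Ff(1) Ft(1)) auto
      fix y :: real assume y: "y \<in> {0..1}"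
      define u where "u = g (y / c)"
      have yc: "y / c \<in> {0..1}" using y c1 by (auto simp: divide_le_eq)
      have u01: "0 \<le> u" "u \<le> 1" unfolding u_def using Fg(4,5) yc by auto
      have f01: "0 \<le> f y" "f y \<le> 1" using Ff(4,5) y by auto
      have tf: "ft y \<le> f y" "ft y \<le> u" using assms(5,6) y unfolding u_def c_def F_def G_def by auto
      have "(f y)^2 / 2 - u^2 / 2 \<le> f y - ft y"
      proof (cases "u \<le> f y")
        case True
        have "(f y)^2 - u^2 = (f y - u) * (f y + u)" by (simp add: power2_eq_square algebra_simps)
        also have "\<dots> \<le> (f y - u) * 2" using True f01 u01 by (intro mult_left_mono) auto
        finally have "(f y)^2 - u^2 \<le> (f y - u) * 2" .
        then show ?thesis using tf by (simp add: field_simps)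
      next
        case False
        then have "(f y)^2 \<le> u^2" using f01 by (intro power_mono) auto
        then show ?thesis using tf by (simp add: field_simps)
      qed
      then show "(f y)^2 / 2 - h2 y \<le> f y - ft y" unfolding h2_def u_def by simp
    qed
    moreover have "integral {0..1} (\<lambda>y. (f y)^2 / 2 - h2 y) = integral {0..1} (\<lambda>y. (f y)^2 / 2) - integral {0..1} h2"
      by (rule Henstock_Kurzweil_Integration.integral_diff)
         (intro cont_int continuous_intros Ff(1) hc1, auto)+
    moreover have "integral {0..1} (\<lambda>y. f y - ft y) = F - H"
      unfolding F_def H_def int01_def
      by (rule Henstock_Kurzweil_Integration.integral_diff) (auto intro: cont_int Ff(1) Ft(1))
    ultimately show ?thesis by linarith
  qed
  have key: "integral {1..c} h2 > 0"
  proof (cases "c = 1")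
    case True
    then have FG: "F = G" unfolding c_def using G0 by simp
    have "((\<lambda>x. f x - g x) has_integral 0) (cbox 0 1)"
    proof -
      have "((\<lambda>x. f x - g x) has_integral (F - G)) {0..1}"
        unfolding F_def G_def int01_def
        by (intro has_integral_diff integrable_integral) (auto intro: cont_int Ff(1) Fg(1))
      then show ?thesis using FG by (simp add: cbox_interval)
    qed
    note hz = this
    have eq: "f x - g x = 0" if "x \<in> {0..1}" for x
    proof (rule has_integral_0_cbox_imp_0[OF _ _ hz])
      show "continuous_on (cbox 0 1) (\<lambda>x. f x - g x)"
        unfolding cbox_interval by (intro continuous_intros Ff(1) Fg(1))
      show "\<And>x. x \<in> box 0 1 \<Longrightarrow> 0 \<le> f x - g x" using gf by (auto simp: box_real)
      show "box 0 (1::real) \<noteq> {}" by (simp add: box_real)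
      show "x \<in> cbox 0 1" using that by (simp add: cbox_interval)
    qed
    have "crossing f g = crossing f f" by (rule crossing_cong) (use eq in auto)
    then have "crossing f f = 2" using assms(4) unfolding dominated_def by simp
    then show ?thesis using crossing_self[OF assms(2)] by simp
  next
    case False
    then have c1': "c > 1" using c1 by simp
    define m where "m = (1 + c) / 2"
    have m: "1 < m" "m < c" unfolding m_def using c1' by auto
    have mc: "m / c < 1" "0 \<le> m / c" using m by (auto simp: divide_less_eq)
    have pos: "h2 m > 0" unfolding h2_def using Fg(8)[OF mc(2) mc(1)] by simp
    have "integral {1..m} h2 + integral {m..c} h2 = integral {1..c} h2"
    proof (rule Henstock_Kurzweil_Integration.integral_combine)
      show "h2 integrable_on {1..c}"
        by (rule integrable_continuous_interval, rule continuous_on_subset[OF hc]) auto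
    qed (use m in auto)
    moreover have "integral {m..c} h2 \<ge> 0"
    proof (rule Henstock_Kurzweil_Integration.integral_nonneg)
      show "h2 integrable_on {m..c}"
        by (rule integrable_continuous_interval, rule continuous_on_subset[OF hc]) (use m in auto)
    qed (simp add: h2_def)
    moreover have "integral {1..m} (\<lambda>x. h2 m) \<le> integral {1..m} h2"
    proof (rule Henstock_Kurzweil_Integration.integral_le)
      show "h2 integrable_on {1..m}"
        by (rule integrable_continuous_interval, rule continuous_on_subset[OF hc]) (use m in auto)
      fix x assume x: "x \<in> {1..m}"
      then have xc: "0 \<le> x / c" "x / c \<le> m / c" using m c1' by (auto simp: divide_right_mono)
      have "g (m / c) \<le> g (x / c)" by (rule Fg(9)) (use xc mc in auto)
      moreover have "0 \<le> g (m / c)" using Fg(4) mc by auto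
      ultimately show "h2 m \<le> h2 x" unfolding h2_def by (simp add: power_mono)
    qed (rule integrable_const_ivl)
    moreover have "integral {1..m} (\<lambda>x. h2 m) = (m - 1) * h2 m" using m by simp
    moreover have "(m - 1) * h2 m > 0" using m pos by simp
    ultimately show ?thesis by linarith
  qed
  have "Af - c * Ag < F - H" using pw split scale key unfolding Af_def by linarith
  then have "(Af - c * Ag) / F < (F - H) / F" using F0 by (rule divide_strict_right_mono)
  then have "Af / F - (c * Ag) / F < 1 - H / F" using F0 by (simp add: diff_divide_distrib)
  moreover have "c * Ag / F = Ag / G" unfolding c_def using F0 G0 by simp
  ultimately show ?thesis unfolding Tf Tg H_def[symmetric] F_def[symmetric] by simp
qed


end
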